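(* Consider the one-ported gather/scatter tree model described in the context, with arbitrary block sizes $m_0,\dots,m_{p-1}\ge 0$ and arbitrary (possibly non-homogeneous) parameters $\alpha_{ij},\beta_{ij},\gamma_i\ge 0$. Let $P\subseteq\{0,\dots,p-1\}$ with $|P|\ge 2$ and let $r\in P$. Then the minimum of $\mathrm{cost}(T)$ over all communication trees $T$ on $P$ with root $r$ is equal to the minimum, over all partitions $P=R\cup\bar R$ into disjoint sets with $r\in R$, all $r'\in\bar R$, all communication trees $T_1$ on $R$ with root $r$ and all communication trees $T_2$ on $\bar R$ with root $r'$, of the quantity \[ \Phi=\begin{cases}\max(\gamma_r m_r,\ \mathrm{cost}(T_2))+\alpha_{r'r}+\beta_{r'r}\,\mathrm{Size}(\bar R) & \text{if } R=\{r\},\\[2pt] \max(\mathrm{cost}(T_1),\ \mathrm{cost}(T_2))+\alpha_{r'r}+\beta_{r'r}\,\mathrm{Size}(\bar R) & \text{if } |R|\ge 2.\end{cases} \]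
   Context: There are $p$ processors $0,\dots,p-1$; processor $i$ has a data block of size $m_i\ge 0$. For a set $R$ of processors, $\mathrm{Size}(R)=\sum_{i\in R}m_i$. For every ordered pair of distinct processors $i,j$ there are a start-up latency $\alpha_{ij}\ge 0$ and a time per unit $\beta_{ij}\ge 0$ (transmitting $s$ units from $i$ to $j$ costs $\alpha_{ij}+\beta_{ij}s$), and each processor $i$ has a local copy cost $\gamma_i\ge0$ per unit. Communication trees (used for gather and scatter): a communication tree on a nonempty finite set $R$ of processors with root $r\in R$ is either the trivial tree (only when $R=\{r\}$), or consists of the root $r$ together with a finite sequence of entries $(E_0,\dots,E_j)$ in which exactly one entry is a special "local copy" marker and every other entry $E_t$ is a communication tree on a set $R_t$ with root $r_t$, there is at least one such tree entry, and the sets $\{r\}$ and the $R_t$ form a partition of $R$ (the roots $r_t$ are the children of $r$). The completion time (one-ported model) is defined recursively: the trivial tree has cost $0$; otherwise put $c_{-1}=0$ and for $t=0,\dots,j$ let $c_t=c_{t-1}+\gamma_r m_r$ if $E_t$ is the local copy marker, and $c_t=\max(c_{t-1},\mathrm{cost}(E_t))+\alpha_{r_t r}+\beta_{r_t r}\,\mathrm{Size}(R_t)$ if $E_t$ is a tree on $R_t$ with root $r_t$; then $\mathrm{cost}(T)=c_j$. *)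

theory Defs
  imports Complex_Main
begin

datatype ctree = Triv nat | Node nat "centry list"
and centry = LocalCopy | Sub ctree

fun troot :: "ctree \<Rightarrow> nat" where
  "troot (Triv r) = r"
| "troot (Node r es) = r"

fun tset :: "ctree \<Rightarrow> nat set" and esets :: "centry \<Rightarrow> nat set" where
  "tset (Triv r) = {r}"
| "tset (Node r es) = insert r (\<Union>e\<in>set es. esets e)"
| "esets LocalCopy = {}"
| "esets (Sub t) = tset t"

fun wf_tree :: "ctree \<Rightarrow> bool" and wf_entry :: "centry \<Rightarrow> bool" where
  "wf_tree (Triv r) = True"
| "wf_tree (Node r es) =
     (length (filter (\<lambda>e. e = LocalCopy) es) = 1
      \<and> (\<exists>t. Sub t \<in> set es)
      \<and> (\<forall>e\<in>set es. wf_entry e)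
      \<and> (\<forall>t. Sub t \<in> set es \<longrightarrow> r \<notin> tset t)
      \<and> (\<forall>i<length es. \<forall>j<length es. i \<noteq> j \<longrightarrow> esets (es ! i) \<inter> esets (es ! j) = {}))"
| "wf_entry LocalCopy = True"
| "wf_entry (Sub t) = wf_tree t"

definition is_ctree :: "nat set \<Rightarrow> nat \<Rightarrow> ctree \<Rightarrow> bool" where
  "is_ctree R r T \<longleftrightarrow> wf_tree T \<and> tset T = R \<and> troot T = r"

definition Size :: "(nat \<Rightarrow> real) \<Rightarrow> nat set \<Rightarrow> real" where
  "Size m R = (\<Sum>i\<in>R. m i)"

text \<open>Completion time in the one-ported model. costs processes the entry list
  from left to right, starting from the accumulated value c (c_{-1} = 0).\<close>
fun cost :: "(nat \<Rightarrow> real) \<Rightarrow> (nat \<Rightarrow> nat \<Rightarrow> real) \<Rightarrow> (nat \<Rightarrow> nat \<Rightarrow> real) \<Rightarrow> (nat \<Rightarrow> real)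
               \<Rightarrow> ctree \<Rightarrow> real"
and costs :: "(nat \<Rightarrow> real) \<Rightarrow> (nat \<Rightarrow> nat \<Rightarrow> real) \<Rightarrow> (nat \<Rightarrow> nat \<Rightarrow> real) \<Rightarrow> (nat \<Rightarrow> real)
               \<Rightarrow> nat \<Rightarrow> real \<Rightarrow> centry list \<Rightarrow> real" where
  "cost m \<alpha> \<beta> \<gamma> (Triv r) = 0"
| "cost m \<alpha> \<beta> \<gamma> (Node r es) = costs m \<alpha> \<beta> \<gamma> r 0 es"
| "costs m \<alpha> \<beta> \<gamma> r c [] = c"
| "costs m \<alpha> \<beta> \<gamma> r c (LocalCopy # es) = costs m \<alpha> \<beta> \<gamma> r (c + \<gamma> r * m r) es"
| "costs m \<alpha> \<beta> \<gamma> r c (Sub t # es) =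
     costs m \<alpha> \<beta> \<gamma> r (max c (cost m \<alpha> \<beta> \<gamma> t) + \<alpha> (troot t) r + \<beta> (troot t) r * Size m (tset t)) es"

end

theory Submission
  imports Defs
begin

abbreviation DJ :: "centry list \<Rightarrow> bool" where
  "DJ \<equiv> sorted_wrt (\<lambda>x y. esets x \<inter> esets y = {})"

lemma idx_iff:
  "(\<forall>i<length es. \<forall>j<length es. i \<noteq> j \<longrightarrow> esets (es!i) \<inter> esets (es!j) = {}) \<longleftrightarrow> DJ es"
  unfolding sorted_wrt_iff_nth_less
proof (intro iffI allI impI)
  fix i j assume that: "\<forall>i j. i < j \<longrightarrow> j < length es \<longrightarrow> esets (es ! i) \<inter> esets (es ! j) = {}" "i < length es" "j < length es" "i \<noteq> j"
  show "esets (es!i) \<inter> esets (es!j) = {}"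
  proof (cases "i < j")
    case True then show ?thesis using that by auto
  next
    case False then have "j < i" using \<open>i \<noteq> j\<close> by simp
    then have "esets (es!j) \<inter> esets (es!i) = {}" using that by auto
    then show ?thesis by (simp add: Int_commute)
  qed
next
  fix i j assume "\<forall>i<length es. \<forall>j<length es. i \<noteq> j \<longrightarrow> esets (es!i) \<inter> esets (es!j) = {}" "i < j" "j < length es"
  then show "esets (es!i) \<inter> esets (es!j) = {}" by auto
qed

lemma wf_Node: "wf_tree (Node r es) \<longleftrightarrow>
   (length (filter (\<lambda>e. e = LocalCopy) es) = 1
      \<and> (\<exists>t. Sub t \<in> set es)
      \<and> (\<forall>e\<in>set es. wf_entry e)
      \<and> (\<forall>t. Sub t \<in> set es \<longrightarrow> r \<notin> tset t)
      \<and> DJ es)"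
  by (simp only: wf_tree.simps idx_iff)

lemma troot_in: "troot t \<in> tset t" by (cases t) auto

lemma costs_app: "costs m \<alpha> \<beta> \<gamma> r c (xs @ ys) = costs m \<alpha> \<beta> \<gamma> r (costs m \<alpha> \<beta> \<gamma> r c xs) ys"
proof (induction xs arbitrary: c)
  case (Cons a xs) then show ?case by (cases a) auto
qed simp

lemma split_last_sub: "Sub t \<in> set es \<Longrightarrow> \<exists>pre t post. es = pre @ Sub t # post \<and> (\<forall>e\<in>set post. e = LocalCopy)"
proof (induction es rule: rev_induct)
  case Nil then show ?case by simp
next
  case (snoc x xs)
  show ?case
  proof (cases x)
    case LocalCopy
    with snoc obtain pre t' post where "xs = pre @ Sub t' # post" "\<forall>e\<in>set post. e = LocalCopy" by auto
    then show ?thesis using LocalCopy by (intro exI[of _ pre] exI[of _ t'] exI[of _ "post @ [x]"]) auto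
  next
    case (Sub t') then show ?thesis by (intro exI[of _ xs] exI[of _ t'] exI[of _ "[]"]) auto
  qed
qed

lemma dj_distinct: "DJ es \<Longrightarrow> length (filter (\<lambda>e. e = LocalCopy) es) \<le> 1 \<Longrightarrow> distinct es"
proof (induction es)
  case (Cons x es)
  have "x \<notin> set es"
  proof (cases x)
    case LocalCopy then show ?thesis using Cons.prems by (auto simp: filter_empty_conv)
  next
    case (Sub t) then show ?thesis using Cons.prems troot_in[of t] by auto
  qed
  moreover have "distinct es" using Cons by (auto split: if_splits)
  ultimately show ?case by simp
qed simp

lemma fin_trees: "finite S \<Longrightarrow> finite {T. wf_tree T \<and> tset T = S}"
proof (induction S rule: finite_psubset_induct)
  case (psubset S)
  define E where "E = insert LocalCopy (\<Union>B\<in>{B. B \<subset> S}. Sub ` {T. wf_tree T \<and> tset T = B})"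
  have fE: "finite E" unfolding E_def
    using psubset by (intro finite.insertI finite_UN_I) (auto intro: finite_subset[of _ "Pow S"])
  have "{T. wf_tree T \<and> tset T = S} \<subseteq> Triv ` S \<union> (\<lambda>(r,es). Node r es) ` (S \<times> {es. set es \<subseteq> E \<and> distinct es})"
  proof
    fix T assume T: "T \<in> {T. wf_tree T \<and> tset T = S}"
    show "T \<in> Triv ` S \<union> (\<lambda>(r,es). Node r es) ` (S \<times> {es. set es \<subseteq> E \<and> distinct es})"
    proof (cases T)
      case (Triv x) then show ?thesis using T by auto
    next
      case (Node r es)
      have wf: "wf_tree (Node r es)" and ts: "tset (Node r es) = S" using T Node by auto
      have "distinct es" using wf dj_distinct unfolding wf_Node by auto
      moreover have "set es \<subseteq> E"
      proof
        fix e assume e: "e \<in> set es"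
        show "e \<in> E"
        proof (cases e)
          case LocalCopy then show ?thesis by (simp add: E_def)
        next
          case (Sub t)
          have "wf_tree t" using wf e Sub unfolding wf_Node by fastforce
          moreover have "tset t \<subset> S" using wf e Sub ts unfolding wf_Node by fastforce
          ultimately show ?thesis unfolding E_def using Sub by blast
        qed
      qed
      moreover have "r \<in> S" using ts by auto
      ultimately show ?thesis using Node by auto
    qed
  qed
  moreover have "finite (Triv ` S \<union> (\<lambda>(r,es). Node r es) ` (S \<times> {es. set es \<subseteq> E \<and> distinct es}))"
    using psubset fE finite_subset_distinct by auto
  ultimately show ?case by (rule finite_subset)
qed

lemma ne_imp_nonempty: "x \<in> A \<Longrightarrow> A \<noteq> {}" by auto

lemma dj_star: "distinct xs \<Longrightarrow> DJ (LocalCopy # map (\<lambda>i. Sub (Triv i)) xs)"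
proof (induction xs)
  case (Cons a xs)
  then show ?case by (auto simp: sorted_wrt_map)
qed simp

theorem proposition2:
  fixes p :: nat and m :: "nat \<Rightarrow> real" and \<alpha> \<beta> :: "nat \<Rightarrow> nat \<Rightarrow> real"
    and \<gamma> :: "nat \<Rightarrow> real" and P :: "nat set" and r :: nat
  assumes m_nn: "\<forall>i<p. m i \<ge> 0"
    and \<alpha>_nn: "\<forall>i<p. \<forall>j<p. i \<noteq> j \<longrightarrow> \<alpha> i j \<ge> 0"
    and \<beta>_nn: "\<forall>i<p. \<forall>j<p. i \<noteq> j \<longrightarrow> \<beta> i j \<ge> 0"
    and \<gamma>_nn: "\<forall>i<p. \<gamma> i \<ge> 0"
    and P_sub: "P \<subseteq> {..<p}"
    and P_card: "card P \<ge> 2"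
    and r_in: "r \<in> P"
  shows "Min {cost m \<alpha> \<beta> \<gamma> T | T. is_ctree P r T} =
         Min {(if R = {r} then max (\<gamma> r * m r) (cost m \<alpha> \<beta> \<gamma> T2)
               else max (cost m \<alpha> \<beta> \<gamma> T1) (cost m \<alpha> \<beta> \<gamma> T2))
              + \<alpha> r' r + \<beta> r' r * Size m Rb
            | R Rb r' T1 T2. R \<union> Rb = P \<and> R \<inter> Rb = {} \<and> r \<in> R \<and> r' \<in> Rb
                \<and> is_ctree R r T1 \<and> is_ctree Rb r' T2}"
    (is "Min ?A = Min ?B")
proof -
  let ?c = "cost m \<alpha> \<beta> \<gamma>"
  let ?cs = "costs m \<alpha> \<beta> \<gamma> r"
  have finP: "finite P" using P_card by (metis card.infinite not_numeral_le_zero)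
  have g_nn: "\<gamma> r * m r \<ge> 0" using r_in P_sub m_nn \<gamma>_nn by auto
  have BA: "?B \<subseteq> ?A"
  proof
    fix x assume "x \<in> ?B"
    then obtain R Rb r' T1 T2 where x: "x = (if R = {r} then max (\<gamma> r * m r) (?c T2)
               else max (?c T1) (?c T2)) + \<alpha> r' r + \<beta> r' r * Size m Rb"
      and c: "R \<union> Rb = P" "R \<inter> Rb = {}" "r \<in> R" "r' \<in> Rb" "is_ctree R r T1" "is_ctree Rb r' T2"
      by blast
    have T2: "wf_tree T2" "tset T2 = Rb" "troot T2 = r'" using c unfolding is_ctree_def by auto
    have T1: "wf_tree T1" "tset T1 = R" "troot T1 = r" using c unfolding is_ctree_def by auto
    have rn: "r \<notin> tset T2" using T2 c by auto
    show "x \<in> ?A"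
    proof (cases "R = {r}")
      case True
      let ?T = "Node r [LocalCopy, Sub T2]"
      have "is_ctree P r ?T" unfolding is_ctree_def wf_Node using T2 rn c True by auto
      moreover have "?c ?T = x" using x True T2 by simp
      ultimately show ?thesis by blast
    next
      case False
      then obtain es1 where e1: "T1 = Node r es1" using T1 by (cases T1) auto
      let ?T = "Node r (es1 @ [Sub T2])"
      have w1: "length (filter (\<lambda>e. e = LocalCopy) es1) = 1"
        "(\<exists>t. Sub t \<in> set es1)" "(\<forall>e\<in>set es1. wf_entry e)"
        "(\<forall>t. Sub t \<in> set es1 \<longrightarrow> r \<notin> tset t)" "DJ es1"
        using T1(1) unfolding e1 wf_Node by auto
      have sub: "\<forall>e\<in>set es1. esets e \<subseteq> R" using T1(2) e1 by auto
      have "DJ (es1 @ [Sub T2])" unfolding sorted_wrt_append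
        using w1(5) sub c(2) T2(2) by auto
      then have "is_ctree P r ?T" unfolding is_ctree_def wf_Node using w1 T2 rn c T1(2) e1 by auto
      moreover have "?c ?T = x" using x False T2 T1 e1 by (simp add: costs_app)
      ultimately show ?thesis by blast
    qed
  qed
  have low: "\<exists>b\<in>?B. b \<le> ?c T" if isT: "is_ctree P r T" for T
  proof -
    have wT: "wf_tree T" "tset T = P" "troot T = r" using isT unfolding is_ctree_def by auto
    obtain es where eT: "T = Node r es"
    proof (cases T)
      case (Triv x) then have "P = {x}" using wT by auto
      then show ?thesis using P_card by simp
    next
      case (Node x es) then show ?thesis using that wT by auto
    qed
    have w: "length (filter (\<lambda>e. e = LocalCopy) es) = 1"
        "(\<exists>t. Sub t \<in> set es)" "(\<forall>e\<in>set es. wf_entry e)"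
        "(\<forall>t. Sub t \<in> set es \<longrightarrow> r \<notin> tset t)" "DJ es"
      using wT(1) unfolding eT wf_Node by auto
    obtain pre t post where sp: "es = pre @ Sub t # post" and pl: "\<forall>e\<in>set post. e = LocalCopy"
      using split_last_sub w(2) by blast
    define Rb where "Rb = tset t"
    define r' where "r' = troot t"
    define R where "R = P - Rb"
    define U where "U = (\<Union>e\<in>set (pre @ post). esets e)"
    have wt: "wf_tree t" using w(3) sp by auto
    have rt: "r \<notin> Rb" using w(4) sp Rb_def by auto
    have Pe: "P = insert r (U \<union> Rb)" using wT(2) eT sp U_def Rb_def by auto
    have dj: "DJ (pre @ post)" "\<forall>e\<in>set (pre @ post). esets e \<inter> Rb = {}"
      using w(5) unfolding sp sorted_wrt_append Rb_def by (auto simp: Int_commute)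
    have RU: "R = insert r U" using Pe dj(2) rt unfolding R_def U_def by auto
    have fp: "filter (\<lambda>e. e = LocalCopy) post = post" using pl by (simp add: filter_id_conv)
    have cnt: "length (filter (\<lambda>e. e = LocalCopy) pre) + length post = 1"
      using w(1) sp fp by simp
    have postc: "post = [] \<or> post = [LocalCopy]"
    proof (cases post)
      case (Cons a l) then show ?thesis using cnt pl by auto
    qed simp
    have cT: "?c T = ?cs (max (?cs 0 pre) (?c t) + \<alpha> r' r + \<beta> r' r * Size m Rb) post"
      using eT sp r'_def Rb_def by (simp add: costs_app)
    have conds: "R \<union> Rb = P" "R \<inter> Rb = {}" "r \<in> R" "r' \<in> Rb" "is_ctree Rb r' t"
      using Pe RU rt troot_in[of t] wt unfolding R_def r'_def Rb_def is_ctree_def by auto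
    show ?thesis
    proof (cases "R = {r}")
      case True
      have nosub: "\<forall>e\<in>set pre. e = LocalCopy"
      proof
        fix e assume e: "e \<in> set pre"
        show "e = LocalCopy"
        proof (cases e)
          case (Sub s)
          have "Sub s \<in> set (pre @ post)" using e Sub by simp
          then have "esets (Sub s) \<subseteq> U" unfolding U_def by (rule UN_upper)
          then have "troot s \<in> U" using troot_in[of s] by auto
          then have "troot s = r" using True RU by auto
          moreover have "r \<notin> tset s" using w(4) sp e Sub by auto
          ultimately show ?thesis using troot_in[of s] by simp
        qed simp
      qed
      have fpre: "filter (\<lambda>e. e = LocalCopy) pre = pre" using nosub by (simp add: filter_id_conv)
      define b where "b = max (\<gamma> r * m r) (?c t) + \<alpha> r' r + \<beta> r' r * Size m Rb"
      have "b \<in> ?B" unfolding b_def using conds True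
        by (intro CollectI exI[of _ R] exI[of _ Rb] exI[of _ r'] exI[of _ "Triv r"] exI[of _ t])
          (auto simp: is_ctree_def)
      moreover have "b \<le> ?c T"
        using postc
      proof
        assume "post = []"
        then have "pre = [LocalCopy]" using cnt fpre nosub
          by (cases pre) (auto simp: filter_empty_conv)
        then show ?thesis using cT \<open>post = []\<close> b_def by simp
      next
        assume "post = [LocalCopy]"
        then have "pre = []" using cnt fpre by auto
        then show ?thesis using cT \<open>post = [LocalCopy]\<close> b_def g_nn by simp
      qed
      ultimately show ?thesis by blast
    next
      case False
      let ?T1 = "Node r (pre @ post)"
      have subex: "\<exists>s. Sub s \<in> set (pre @ post)"
      proof (rule ccontr)
        assume "\<not> ?thesis"
        then have "\<forall>e\<in>set (pre @ post). esets e = {}"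
          by (metis centry.exhaust esets.simps(1))
        then have "U = {}" unfolding U_def by auto
        then show False using False RU by auto
      qed
      have "is_ctree R r ?T1" unfolding is_ctree_def wf_Node
        using cnt fp subex w(3,4) dj(1) RU U_def sp by auto
      moreover have cT1: "?c ?T1 = ?cs (?cs 0 pre) post" by (simp add: costs_app)
      define b where "b = max (?c ?T1) (?c t) + \<alpha> r' r + \<beta> r' r * Size m Rb"
      have "b \<in> ?B" unfolding b_def using conds False calculation
        by (intro CollectI exI[of _ R] exI[of _ Rb] exI[of _ r'] exI[of _ ?T1] exI[of _ t]) auto
      moreover have "b \<le> ?c T"
        using postc
      proof
        assume "post = []"
        then show ?thesis using cT cT1 b_def by simp
      next
        assume "post = [LocalCopy]"
        then show ?thesis using cT cT1 b_def g_nn by simp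
      qed
      ultimately show ?thesis by blast
    qed
  qed
  have fA: "finite ?A"
  proof -
    have "?A = ?c ` {T. wf_tree T \<and> tset T = P \<and> troot T = r}" unfolding is_ctree_def by auto
    moreover have "finite {T. wf_tree T \<and> tset T = P \<and> troot T = r}"
      using fin_trees[OF finP] by (rule finite_subset[rotated]) auto
    ultimately show ?thesis by simp
  qed
  have Ane: "?A \<noteq> {}"
  proof -
    define xs where "xs = sorted_list_of_set (P - {r})"
    have dxs: "distinct xs" "set xs = P - {r}" using finP xs_def by auto
    have ne: "P - {r} \<noteq> {}"
    proof
      assume "P - {r} = {}"
      then have "P \<subseteq> {r}" by auto
      then have "card P \<le> card {r}" by (rule card_mono[rotated]) simp
      then show False using P_card by simp
    qed
    let ?T = "Node r (LocalCopy # map (\<lambda>i. Sub (Triv i)) xs)"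
    have dj: "DJ (LocalCopy # map (\<lambda>i. Sub (Triv i)) xs)" using dxs(1) by (rule dj_star)
    have f: "length (filter (\<lambda>e. e = LocalCopy) (LocalCopy # map (\<lambda>i. Sub (Triv i)) xs)) = 1"
      by (simp add: filter_empty_conv)
    obtain y where y: "y \<in> set xs" using ne dxs(2) by blast
    have "Sub (Triv y) \<in> set (LocalCopy # map (\<lambda>i. Sub (Triv i)) xs)"
      using y by simp
    then have ex: "\<exists>t. Sub t \<in> set (LocalCopy # map (\<lambda>i. Sub (Triv i)) xs)" by (rule exI)
    have we: "\<forall>e\<in>set (LocalCopy # map (\<lambda>i. Sub (Triv i)) xs). wf_entry e" by simp
    have rn: "\<forall>t. Sub t \<in> set (LocalCopy # map (\<lambda>i. Sub (Triv i)) xs) \<longrightarrow> r \<notin> tset t"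
    proof (intro allI impI)
      fix t assume "Sub t \<in> set (LocalCopy # map (\<lambda>i. Sub (Triv i)) xs)"
      then obtain i where "i \<in> set xs" "t = Triv i" by auto
      then show "r \<notin> tset t" unfolding dxs(2) by auto
    qed
    have un: "(\<Union>e\<in>set (LocalCopy # map (\<lambda>i. Sub (Triv i)) xs). esets e) = set xs"
      by auto
    have ts: "tset ?T = P" unfolding tset.simps un dxs(2) using r_in by blast
    have "is_ctree P r ?T" unfolding is_ctree_def wf_Node using dj f ex we rn ts by simp
    then have "cost m \<alpha> \<beta> \<gamma> ?T \<in> ?A" by (intro CollectI exI[of _ ?T]) simp
    then show ?thesis by (rule ne_imp_nonempty)
  qed
  obtain T where T: "is_ctree P r T" "Min ?A = ?c T"
    using Min_in[OF fA Ane] by auto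
  obtain b where b: "b \<in> ?B" "b \<le> ?c T" using low[OF T(1)] by blast
  have Bne: "?B \<noteq> {}" using b(1) by (rule ne_imp_nonempty)
  have fB: "finite ?B" using fA BA finite_subset by blast
  have "Min ?A \<le> Min ?B" using Min_antimono[OF BA Bne fA] .
  moreover have "Min ?B \<le> Min ?A" using Min_le[OF fB b(1)] b(2) T(2) by linarith
  ultimately show ?thesis by linarith
qed

end
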